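(* With three agents, items $\mathcal{M}=\{(j,k): j\in\{1,2,3\},k\in\{1,2,3,4\}\}$ and the matrices $$B=\begin{pmatrix}1&1&1&1\\1&1&1&1\\1&1&1&1\end{pmatrix},\ O=\begin{pmatrix}17&25&12&1\\2&22&3&28\\11&0&21&23\end{pmatrix},\ E^1=\begin{pmatrix}-3&1&1&1\\0&0&0&0\\0&0&0&0\end{pmatrix},$$ $$E^2=\begin{pmatrix}-3&1&0&0\\1&0&0&0\\1&0&0&0\end{pmatrix},\ E^3=\begin{pmatrix}-3&0&1&0\\0&0&1&0\\0&0&0&1\end{pmatrix},$$ define additive utilities $u_i((j,k))=10^6B_{jk}+10^3O_{jk}+E^i_{jk}$ and $w_i((j,k))=10^6B_{jk}+10^3O_{jk}-E^i_{jk}$ for $i\in[3]$. Let $I=(\mathcal{M},[3],(u_i))$ and $J=(\mathcal{M},[3],(w_i))$. Then: there is an MmS allocation for $I$ but no MmS allocation for $-I=(\mathcal{M},[3],(-u_i))$; and there is no MmS allocation for $J$ but there is an MmS allocation for $-J=(\mathcal{M},[3],(-w_i))$.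
   Context: $\Pi_N(\mathcal{M})$ is the set of ordered $N$-partitions of $\mathcal{M}$ (parts may be empty). For an additive function $v$, $MmS_{v}^N(\mathcal{M}):=\max_{(S_1,\ldots,S_N)\in\Pi_N(\mathcal{M})}\min_{j} v(S_j)$. An MmS allocation for an instance $(\mathcal{M},[N],(v_i))$ is an allocation $(S_1,\dots,S_N)\in\Pi_N(\mathcal{M})$ with $v_i(S_i)\ge MmS_{v_i}^N(\mathcal{M})$ for all $i$. *)

theory Defs
  imports Main
begin

definition ordered_partitions :: "'a set \<Rightarrow> nat \<Rightarrow> (nat \<Rightarrow> 'a set) set" where
  "ordered_partitions M N =
     {S. (\<forall>j. j \<notin> {1..N} \<longrightarrow> S j = {}) \<and>
         (\<Union>j\<in>{1..N}. S j) = M \<and>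
         (\<forall>i\<in>{1..N}. \<forall>j\<in>{1..N}. i \<noteq> j \<longrightarrow> S i \<inter> S j = {})}"

definition MmS :: "('a \<Rightarrow> int) \<Rightarrow> nat \<Rightarrow> 'a set \<Rightarrow> int" where
  "MmS v N M = Max ((\<lambda>S. Min ((\<lambda>j. sum v (S j)) ` {1..N})) ` ordered_partitions M N)"

definition MmS_allocation :: "'a set \<Rightarrow> nat \<Rightarrow> (nat \<Rightarrow> 'a \<Rightarrow> int) \<Rightarrow> (nat \<Rightarrow> 'a set) \<Rightarrow> bool" where
  "MmS_allocation M N v S \<longleftrightarrow>
     S \<in> ordered_partitions M N \<and> (\<forall>i\<in>{1..N}. sum (v i) (S i) \<ge> MmS (v i) N M)"

definition items :: "(nat \<times> nat) set" where
  "items = {1..3} \<times> {1..4}"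

definition Bmat :: "int list list" where
  "Bmat = [[1,1,1,1],[1,1,1,1],[1,1,1,1]]"

definition Omat :: "int list list" where
  "Omat = [[17,25,12,1],[2,22,3,28],[11,0,21,23]]"

definition Emats :: "int list list list" where
  "Emats = [ [[-3,1,1,1],[0,0,0,0],[0,0,0,0]],
             [[-3,1,0,0],[1,0,0,0],[1,0,0,0]],
             [[-3,0,1,0],[0,0,1,0],[0,0,0,1]] ]"

definition entry :: "int list list \<Rightarrow> nat \<Rightarrow> nat \<Rightarrow> int" where
  "entry A j k = A ! (j - 1) ! (k - 1)"

definition u :: "nat \<Rightarrow> nat \<times> nat \<Rightarrow> int" where
  "u i x = (case x of (j, k) \<Rightarrow>
     10^6 * entry Bmat j k + 10^3 * entry Omat j k + entry (Emats ! (i - 1)) j k)"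

definition w :: "nat \<Rightarrow> nat \<times> nat \<Rightarrow> int" where
  "w i x = (case x of (j, k) \<Rightarrow>
     10^6 * entry Bmat j k + 10^3 * entry Omat j k - entry (Emats ! (i - 1)) j k)"

end

theory Submission imports Defs begin


fun sols :: "('a \<Rightarrow> int) \<Rightarrow> 'a list \<Rightarrow> int \<Rightarrow> 'a list list" where
  "sols c [] t = (if t = 0 then [[]] else [])"
| "sols c (x#xs) t = (if t < 0 then [] else map ((#) x) (sols c xs (t - c x)) @ sols c xs t)"

lemma sols_complete:
  assumes "distinct xs" "\<forall>x\<in>set xs. c x \<ge> 0" "S \<subseteq> set xs" "sum c S = t"
  shows "\<exists>ys\<in>set (sols c xs t). set ys = S"
  using assms
proof (induction xs arbitrary: S t)
  case Nil
  then show ?case by auto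
next
  case (Cons x xs)
  have fin: "finite S" using Cons.prems(3) finite_subset by blast
  have nn: "sum c S \<ge> 0" using Cons.prems(2,3) by (intro sum_nonneg) auto
  show ?case
  proof (cases "x \<in> S")
    case True
    have "S - {x} \<subseteq> set xs" using Cons.prems(3) by auto
    moreover have "sum c (S - {x}) = t - c x" using Cons.prems(4) fin True by (simp add: sum_diff1)
    ultimately obtain ys where "ys \<in> set (sols c xs (t - c x))" "set ys = S - {x}"
      using Cons.IH[of "S - {x}" "t - c x"] Cons.prems by auto
    then show ?thesis using True nn Cons.prems(4) by (intro bexI[of _ "x#ys"]) auto
  next
    case False
    have "S \<subseteq> set xs" using Cons.prems(3) False by auto
    then obtain ys where "ys \<in> set (sols c xs t)" "set ys = S"
      using Cons.IH[of S t] Cons.prems by auto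
    then show ?thesis using nn Cons.prems(4) by auto
  qed
qed

definition cval :: "nat \<times> nat \<Rightarrow> int" where "cval x = 1000 + entry Omat (fst x) (snd x)"
definition itl :: "(nat \<times> nat) list" where
 "itl = [(1,1),(1,2),(1,3),(1,4),(2,1),(2,2),(2,3),(2,4),(3,1),(3,2),(3,3),(3,4)]"

lemma sols_val: "sols cval itl 4055 = [[(1,1),(1,2),(1,3),(1,4)],[(1,1),(1,2),(2,1),(3,1)],[(1,1),(1,3),(2,3),(3,4)],[(1,2),(2,1),(2,4),(3,2)],[(1,3),(2,2),(3,2),(3,3)],[(1,4),(2,2),(3,1),(3,3)],[(1,4),(2,3),(2,4),(3,4)],[(2,1),(2,2),(2,3),(2,4)],[(3,1),(3,2),(3,3),(3,4)]]"
  by (simp add: itl_def cval_def entry_def Omat_def)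
definition A1 :: "(nat \<times> nat) set" where "A1 = {(1,1),(1,2),(1,3),(1,4)}"
definition A2 :: "(nat \<times> nat) set" where "A2 = {(1,1),(1,2),(2,1),(3,1)}"
definition A3 :: "(nat \<times> nat) set" where "A3 = {(1,1),(1,3),(2,3),(3,4)}"
definition A4 :: "(nat \<times> nat) set" where "A4 = {(1,2),(2,1),(2,4),(3,2)}"
definition A5 :: "(nat \<times> nat) set" where "A5 = {(1,3),(2,2),(3,2),(3,3)}"
definition A6 :: "(nat \<times> nat) set" where "A6 = {(1,4),(2,2),(3,1),(3,3)}"
definition A7 :: "(nat \<times> nat) set" where "A7 = {(1,4),(2,3),(2,4),(3,4)}"
definition A8 :: "(nat \<times> nat) set" where "A8 = {(2,1),(2,2),(2,3),(2,4)}"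
definition A9 :: "(nat \<times> nat) set" where "A9 = {(3,1),(3,2),(3,3),(3,4)}"

lemma items_eq: "items = set itl"
proof -
  have a: "{1..3::nat} = {1,2,3}" by auto
  have b: "{1..4::nat} = {1,2,3,4}" by auto
  show ?thesis unfolding items_def itl_def a b by auto
qed

lemma sols_items:
  assumes "S \<subseteq> items" "sum cval S = 4055"
  shows "S = A1 \<or> S = A2 \<or> S = A3 \<or> S = A4 \<or> S = A5 \<or> S = A6 \<or> S = A7 \<or> S = A8 \<or> S = A9"
proof -
  have "\<forall>x\<in>set itl. cval x \<ge> 0" by (simp add: itl_def cval_def entry_def Omat_def)
  moreover have "distinct itl" by (simp add: itl_def)
  ultimately obtain ys where "ys \<in> set (sols cval itl 4055)" "set ys = S"
    using sols_complete[of itl cval S 4055] assms items_eq by auto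
  moreover have "map set (sols cval itl 4055) = [A1,A2,A3,A4,A5,A6,A7,A8,A9]"
    unfolding sols_val by (simp add: A1_def A2_def A3_def A4_def A5_def A6_def A7_def A8_def A9_def)
  ultimately have "S \<in> set [A1,A2,A3,A4,A5,A6,A7,A8,A9]"
    by (metis image_eqI list.set_map)
  then show ?thesis by simp
qed

definition ev :: "nat \<Rightarrow> nat \<times> nat \<Rightarrow> int" where
  "ev i x = entry (Emats ! (i - 1)) (fst x) (snd x)"

lemma u_split: "x \<in> items \<Longrightarrow> u i x = 1000 * cval x + ev i x"
  unfolding items_eq itl_def by (auto simp: cval_def ev_def entry_def Omat_def Bmat_def Emats_def u_def w_def)

lemma w_split: "x \<in> items \<Longrightarrow> w i x = 1000 * cval x - ev i x"
  unfolding items_eq itl_def by (auto simp: cval_def ev_def entry_def Omat_def Bmat_def Emats_def u_def w_def)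

lemma sum_u_split: "S \<subseteq> items \<Longrightarrow> sum (u i) S = 1000 * sum cval S + sum (ev i) S"
proof -
  assume "S \<subseteq> items"
  then have "sum (u i) S = sum (\<lambda>x. 1000 * cval x + ev i x) S"
    by (intro sum.cong) (auto simp: u_split)
  then show ?thesis by (simp add: sum.distrib sum_distrib_left)
qed

lemma sum_w_split: "S \<subseteq> items \<Longrightarrow> sum (w i) S = 1000 * sum cval S - sum (ev i) S"
proof -
  assume "S \<subseteq> items"
  then have "sum (w i) S = sum (\<lambda>x. 1000 * cval x - ev i x) S"
    by (intro sum.cong) (auto simp: w_split)
  then show ?thesis by (simp add: sum_subtractf sum_distrib_left)
qed

lemma ev_bound:
  assumes "S \<subseteq> items" "i \<in> {1,2,3}"
  shows "\<bar>sum (ev i) S\<bar> \<le> 6"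
proof -
  have fin: "finite items" unfolding items_eq by simp
  have "\<bar>sum (ev i) S\<bar> \<le> sum (\<lambda>x. \<bar>ev i x\<bar>) S" by (rule sum_abs)
  also have "\<dots> \<le> sum (\<lambda>x. \<bar>ev i x\<bar>) items"
    by (rule sum_mono2[OF fin assms(1)]) auto
  also have "\<dots> = 6"
  proof -
    from assms(2) consider "i = 1" | "i = 2" | "i = 3" by auto
    then show ?thesis unfolding items_eq itl_def
      by cases (simp_all add: ev_def entry_def Emats_def)
  qed
  finally show ?thesis .
qed

lemma sum_cval_items: "sum cval items = 12165"
  unfolding items_eq itl_def by (simp add: cval_def entry_def Omat_def)


lemma three: "{1..3::nat} = {1,2,3}" by auto

lemma op_props:
  assumes "S \<in> ordered_partitions M 3"
  shows "M = S 1 \<union> S 2 \<union> S 3" "S 1 \<inter> S 2 = {}" "S 1 \<inter> S 3 = {}" "S 2 \<inter> S 3 = {}"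
    "\<And>j. j \<notin> {1,2,3} \<Longrightarrow> S j = {}"
  using assms unfolding ordered_partitions_def three by auto

lemma op_sub: "S \<in> ordered_partitions M 3 \<Longrightarrow> j \<in> {1,2,3} \<Longrightarrow> S j \<subseteq> M"
  unfolding ordered_partitions_def three by blast

lemma op_sum:
  assumes "finite M" "S \<in> ordered_partitions M 3"
  shows "sum v M = sum v (S 1) + sum v (S 2) + sum v (S 3)"
proof -
  note p = op_props[OF assms(2)]
  have f: "finite (S j)" if "j \<in> {1,2,3}" for j
    using op_sub[OF assms(2) that] assms(1) finite_subset by blast
  have "sum v M = sum v (S 1 \<union> S 2) + sum v (S 3)"
    using p f by (subst p(1), intro sum.union_disjoint) auto
  also have "sum v (S 1 \<union> S 2) = sum v (S 1) + sum v (S 2)"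
    using p f by (intro sum.union_disjoint) auto
  finally show ?thesis .
qed

lemma op_finite:
  assumes "finite M"
  shows "finite (ordered_partitions M 3)"
proof -
  let ?f = "\<lambda>S. (S (1::nat), S 2, S 3)"
  have inj: "inj_on ?f (ordered_partitions M 3)"
  proof (rule inj_onI)
    fix S T assume S: "S \<in> ordered_partitions M 3" and T: "T \<in> ordered_partitions M 3"
      and eq: "?f S = ?f T"
    show "S = T"
    proof
      fix j show "S j = T j"
        using eq op_props(5)[OF S, of j] op_props(5)[OF T, of j] by (cases "j \<in> {1,2,3}") auto
    qed
  qed
  have "?f ` ordered_partitions M 3 \<subseteq> Pow M \<times> Pow M \<times> Pow M"
    using op_sub by fastforce
  then have "finite (?f ` ordered_partitions M 3)"
    using assms by (meson finite_Pow_iff finite_SigmaI finite_subset)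
  then show ?thesis using finite_imageD[OF _ inj] by blast
qed

lemma MmS_eq:
  assumes "finite M" "P \<in> ordered_partitions M 3"
    "sum v (P 1) = t" "sum v (P 2) = t" "sum v (P 3) = t"
  shows "MmS v 3 M = t"
proof -
  have tot: "sum v M = 3 * t" using op_sum[OF assms(1,2), of v] assms(3-5) by simp
  let ?F = "(\<lambda>S. Min ((\<lambda>j. sum v (S j)) ` {1..3})) ` ordered_partitions M 3"
  have "Max ?F = t"
  proof (rule Max_eqI)
    show "finite ?F" using op_finite[OF assms(1)] by simp
  next
    fix y assume "y \<in> ?F"
    then obtain S where S: "S \<in> ordered_partitions M 3"
      and y: "y = Min ((\<lambda>j. sum v (S j)) ` {1..3})" by blast
    have "y = min (sum v (S 1)) (min (sum v (S 2)) (sum v (S 3)))"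
      unfolding y three by (simp add: min.assoc)
    moreover have "sum v (S 1) + sum v (S 2) + sum v (S 3) = 3 * t"
      using op_sum[OF assms(1) S, of v] tot by simp
    ultimately show "y \<le> t" by linarith
  next
    have "Min ((\<lambda>j. sum v (P j)) ` {1..3}) = t" unfolding three using assms(3-5) by simp
    then show "t \<in> ?F" using assms(2) by (metis image_eqI)
  qed
  then show ?thesis unfolding MmS_def by simp
qed

lemma MmS_both:
  assumes "finite M" "P \<in> ordered_partitions M 3"
    "sum v (P 1) = t" "sum v (P 2) = t" "sum v (P 3) = t"
  shows "MmS v 3 M = t \<and> MmS (\<lambda>x. - v x) 3 M = - t"
  using MmS_eq[OF assms] MmS_eq[OF assms(1,2), of "\<lambda>x. - v x" "- t"] assms(3-5)
  by (simp add: sum_negf)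

definition mk :: "'a set \<Rightarrow> 'a set \<Rightarrow> 'a set \<Rightarrow> nat \<Rightarrow> 'a set" where
  "mk A B C = (\<lambda>j. if j = 1 then A else if j = 2 then B else if j = 3 then C else {})"

lemma mk_simps[simp]: "mk A B C 1 = A" "mk A B C 2 = B" "mk A B C 3 = C"
  by (simp_all add: mk_def)

lemma mk_Suc0[simp]: "mk A B C (Suc 0) = A"
  by (simp add: mk_def)

lemma mk_op:
  assumes "A \<union> B \<union> C = M" "A \<inter> B = {}" "A \<inter> C = {}" "B \<inter> C = {}"
  shows "mk A B C \<in> ordered_partitions M 3"
  using assms unfolding ordered_partitions_def three mk_def by auto

lemma fin_items: "finite items" unfolding items_eq by simp

lemma P1: "mk A1 A8 A9 \<in> ordered_partitions items 3"
  by (rule mk_op) (auto simp: items_eq itl_def A1_def A2_def A3_def A4_def A5_def A6_def A7_def A8_def A9_def)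
lemma P2: "mk A2 A5 A7 \<in> ordered_partitions items 3"
  by (rule mk_op) (auto simp: items_eq itl_def A1_def A2_def A3_def A4_def A5_def A6_def A7_def A8_def A9_def)
lemma P3: "mk A3 A4 A6 \<in> ordered_partitions items 3"
  by (rule mk_op) (auto simp: items_eq itl_def A1_def A2_def A3_def A4_def A5_def A6_def A7_def A8_def A9_def)

lemma MmS_vals1:
  "MmS (u 1) 3 items = 4055000 \<and> MmS (\<lambda>x. - u 1 x) 3 items = - 4055000
   \<and> MmS (w 1) 3 items = 4055000 \<and> MmS (\<lambda>x. - w 1 x) 3 items = - 4055000"
proof -
  have a: "sum (u 1) A1 = 4055000" "sum (u 1) A8 = 4055000" "sum (u 1) A9 = 4055000"
    by (simp_all add: A1_def A8_def A9_def entry_def Omat_def Bmat_def Emats_def u_def w_def)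
  have b: "sum (w 1) A1 = 4055000" "sum (w 1) A8 = 4055000" "sum (w 1) A9 = 4055000"
    by (simp_all add: A1_def A8_def A9_def entry_def Omat_def Bmat_def Emats_def u_def w_def)
  show ?thesis
    using MmS_both[OF fin_items P1, unfolded mk_simps, OF a]
      MmS_both[OF fin_items P1, unfolded mk_simps, OF b] by blast
qed

lemma MmS_vals2:
  "MmS (u 2) 3 items = 4055000 \<and> MmS (\<lambda>x. - u 2 x) 3 items = - 4055000
   \<and> MmS (w 2) 3 items = 4055000 \<and> MmS (\<lambda>x. - w 2 x) 3 items = - 4055000"
proof -
  have a: "sum (u 2) A2 = 4055000" "sum (u 2) A5 = 4055000" "sum (u 2) A7 = 4055000"
    by (simp_all add: A2_def A5_def A7_def entry_def Omat_def Bmat_def Emats_def u_def w_def)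
  have b: "sum (w 2) A2 = 4055000" "sum (w 2) A5 = 4055000" "sum (w 2) A7 = 4055000"
    by (simp_all add: A2_def A5_def A7_def entry_def Omat_def Bmat_def Emats_def u_def w_def)
  show ?thesis
    using MmS_both[OF fin_items P2, unfolded mk_simps, OF a]
      MmS_both[OF fin_items P2, unfolded mk_simps, OF b] by blast
qed

lemma MmS_vals3:
  "MmS (u 3) 3 items = 4055000 \<and> MmS (\<lambda>x. - u 3 x) 3 items = - 4055000
   \<and> MmS (w 3) 3 items = 4055000 \<and> MmS (\<lambda>x. - w 3 x) 3 items = - 4055000"
proof -
  have a: "sum (u 3) A3 = 4055000" "sum (u 3) A4 = 4055000" "sum (u 3) A6 = 4055000"
    by (simp_all add: A3_def A4_def A6_def entry_def Omat_def Bmat_def Emats_def u_def w_def)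
  have b: "sum (w 3) A3 = 4055000" "sum (w 3) A4 = 4055000" "sum (w 3) A6 = 4055000"
    by (simp_all add: A3_def A4_def A6_def entry_def Omat_def Bmat_def Emats_def u_def w_def)
  show ?thesis
    using MmS_both[OF fin_items P3, unfolded mk_simps, OF a]
      MmS_both[OF fin_items P3, unfolded mk_simps, OF b] by blast
qed

lemma MmS_vals:
  assumes "i \<in> {1,2,3}"
  shows "MmS (u i) 3 items = 4055000 \<and> MmS (\<lambda>x. - u i x) 3 items = - 4055000
       \<and> MmS (w i) 3 items = 4055000 \<and> MmS (\<lambda>x. - w i x) 3 items = - 4055000"
  using assms MmS_vals1 MmS_vals2 MmS_vals3 by auto

lemma filt1:
  assumes "X = A1 \<or> X = A2 \<or> X = A3 \<or> X = A4 \<or> X = A5 \<or> X = A6 \<or> X = A7 \<or> X = A8 \<or> X = A9" "sum (ev 1) X \<le> 0"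
  shows "X = A1 \<or> X = A2 \<or> X = A3 \<or> X = A8 \<or> X = A9"
  using assms by (elim disjE) (simp_all add: A1_def A2_def A3_def A4_def A5_def A6_def A7_def A8_def A9_def ev_def entry_def Emats_def)

lemma filt2:
  assumes "X = A1 \<or> X = A2 \<or> X = A3 \<or> X = A4 \<or> X = A5 \<or> X = A6 \<or> X = A7 \<or> X = A8 \<or> X = A9" "sum (ev 2) X \<le> 0"
  shows "X = A1 \<or> X = A2 \<or> X = A3 \<or> X = A5 \<or> X = A7"
  using assms by (elim disjE) (simp_all add: A1_def A2_def A3_def A4_def A5_def A6_def A7_def A8_def A9_def ev_def entry_def Emats_def)

lemma filt3:
  assumes "X = A1 \<or> X = A2 \<or> X = A3 \<or> X = A4 \<or> X = A5 \<or> X = A6 \<or> X = A7 \<or> X = A8 \<or> X = A9" "sum (ev 3) X \<le> 0"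
  shows "X = A1 \<or> X = A2 \<or> X = A3 \<or> X = A4 \<or> X = A6"
  using assms by (elim disjE) (simp_all add: A1_def A2_def A3_def A4_def A5_def A6_def A7_def A8_def A9_def ev_def entry_def Emats_def)

lemma no_triple:
  assumes "X = A1 \<or> X = A2 \<or> X = A3 \<or> X = A8 \<or> X = A9" "Y = A1 \<or> Y = A2 \<or> Y = A3 \<or> Y = A5 \<or> Y = A7" "Z = A1 \<or> Z = A2 \<or> Z = A3 \<or> Z = A4 \<or> Z = A6"
    "X \<inter> Y = {}" "X \<inter> Z = {}" "Y \<inter> Z = {}"
  shows False
  using assms by (elim disjE) (simp_all add: A1_def A2_def A3_def A4_def A5_def A6_def A7_def A8_def A9_def)

lemma core:
  assumes S: "S \<in> ordered_partitions items 3"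
    and c: "\<And>i. i \<in> {1,2,3} \<Longrightarrow> sum cval (S i) = 4055 \<and> sum (ev i) (S i) \<le> 0"
  shows False
proof -
  have g: "S i = A1 \<or> S i = A2 \<or> S i = A3 \<or> S i = A4 \<or> S i = A5 \<or> S i = A6 \<or> S i = A7 \<or> S i = A8 \<or> S i = A9"
    if "i \<in> {1,2,3}" for i
    using sols_items[OF op_sub[OF S that]] c[OF that] by blast
  have x: "(1::nat) \<in> {1,2,3}" "(2::nat) \<in> {1,2,3}" "(3::nat) \<in> {1,2,3}" by simp_all
  show False
    by (rule no_triple[OF filt1[OF g[OF x(1)] conjunct2[OF c[OF x(1)]]]
        filt2[OF g[OF x(2)] conjunct2[OF c[OF x(2)]]] filt3[OF g[OF x(3)] conjunct2[OF c[OF x(3)]]]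
        op_props(2-4)[OF S]])
qed

lemma le_aux: "(1000::int) * c + e \<le> 4055000 \<Longrightarrow> \<bar>e\<bar> \<le> 6 \<Longrightarrow> c \<le> 4055"
proof (rule ccontr)
  assume a: "1000 * c + e \<le> 4055000" "\<bar>e\<bar> \<le> 6" "\<not> c \<le> 4055"
  then have "c \<ge> 4056" by simp
  then have "1000 * c \<ge> 4056000" by simp
  then show False using a by linarith
qed

lemma ge_aux: "(1000::int) * c - e \<ge> 4055000 \<Longrightarrow> \<bar>e\<bar> \<le> 6 \<Longrightarrow> c \<ge> 4055"
proof (rule ccontr)
  assume a: "1000 * c - e \<ge> 4055000" "\<bar>e\<bar> \<le> 6" "\<not> c \<ge> 4055"
  then have "c \<le> 4054" by simp
  then have "1000 * c \<le> 4054000" by simp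
  then show False using a by linarith
qed

lemma cval_total:
  assumes "S \<in> ordered_partitions items 3"
  shows "sum cval (S 1) + sum cval (S 2) + sum cval (S 3) = 12165"
  using op_sum[OF fin_items assms, of cval] sum_cval_items by simp

lemma no_neg_u: "\<not> (\<exists>S. MmS_allocation items 3 (\<lambda>i x. - u i x) S)"
proof
  assume "\<exists>S. MmS_allocation items 3 (\<lambda>i x. - u i x) S"
  then obtain S where S: "S \<in> ordered_partitions items 3"
    and al: "\<And>i. i \<in> {1..3} \<Longrightarrow> sum (\<lambda>x. - u i x) (S i) \<ge> MmS (\<lambda>x. - u i x) 3 items"
    unfolding MmS_allocation_def by blast
  have le: "1000 * sum cval (S i) + sum (ev i) (S i) \<le> 4055000" if i: "i \<in> {1,2,3}" for i
  proof -
    have "sum (\<lambda>x. - u i x) (S i) \<ge> - 4055000" using al[of i] MmS_vals[OF i] i three by auto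
    then have "sum (u i) (S i) \<le> 4055000" by (simp add: sum_negf)
    then show ?thesis using sum_u_split[OF op_sub[OF S i]] by simp
  qed
  have cle: "sum cval (S i) \<le> 4055" if i: "i \<in> {1,2,3}" for i
    using le_aux[OF le[OF i] ev_bound[OF op_sub[OF S i] i]] .
  have ceq: "sum cval (S i) = 4055" if i: "i \<in> {1,2,3}" for i
    using cle[of 1] cle[of 2] cle[of 3] cval_total[OF S] i by auto
  show False
  proof (rule core[OF S])
    fix i :: nat assume i: "i \<in> {1,2,3}"
    show "sum cval (S i) = 4055 \<and> sum (ev i) (S i) \<le> 0"
      using ceq[OF i] le[OF i] by simp
  qed
qed

lemma no_w: "\<not> (\<exists>S. MmS_allocation items 3 w S)"
proof
  assume "\<exists>S. MmS_allocation items 3 w S"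
  then obtain S where S: "S \<in> ordered_partitions items 3"
    and al: "\<And>i. i \<in> {1..3} \<Longrightarrow> sum (w i) (S i) \<ge> MmS (w i) 3 items"
    unfolding MmS_allocation_def by blast
  have ge: "1000 * sum cval (S i) - sum (ev i) (S i) \<ge> 4055000" if i: "i \<in> {1,2,3}" for i
  proof -
    have "sum (w i) (S i) \<ge> 4055000" using al[of i] MmS_vals[OF i] i three by auto
    then show ?thesis using sum_w_split[OF op_sub[OF S i]] by simp
  qed
  have cge: "sum cval (S i) \<ge> 4055" if i: "i \<in> {1,2,3}" for i
    using ge_aux[OF ge[OF i] ev_bound[OF op_sub[OF S i] i]] .
  have ceq: "sum cval (S i) = 4055" if i: "i \<in> {1,2,3}" for i
    using cge[of 1] cge[of 2] cge[of 3] cval_total[OF S] i by auto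
  show False
  proof (rule core[OF S])
    fix i :: nat assume i: "i \<in> {1,2,3}"
    show "sum cval (S i) = 4055 \<and> sum (ev i) (S i) \<le> 0"
      using ceq[OF i] ge[OF i] by simp
  qed
qed

lemma yes_u: "\<exists>S. MmS_allocation items 3 u S"
proof
  have a: "sum (u 1) A1 = 4055000" "sum (u 2) A8 = 4055001" "sum (u 3) A9 = 4055001"
    by (simp_all add: A1_def A8_def A9_def entry_def Omat_def Bmat_def Emats_def u_def w_def)
  show "MmS_allocation items 3 u (mk A1 A8 A9)"
    unfolding MmS_allocation_def three using P1 a MmS_vals1 MmS_vals2 MmS_vals3 by simp
qed

lemma yes_neg_w: "\<exists>S. MmS_allocation items 3 (\<lambda>i x. - w i x) S"
proof
  have a: "sum (w 1) A1 = 4055000" "sum (w 2) A8 = 4054999" "sum (w 3) A9 = 4054999"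
    by (simp_all add: A1_def A8_def A9_def entry_def Omat_def Bmat_def Emats_def u_def w_def)
  show "MmS_allocation items 3 (\<lambda>i x. - w i x) (mk A1 A8 A9)"
    unfolding MmS_allocation_def three using P1 a MmS_vals1 MmS_vals2 MmS_vals3 by (simp add: sum_negf)
qed

theorem proposition4:
  shows "(\<exists>S. MmS_allocation items 3 u S)
       \<and> \<not> (\<exists>S. MmS_allocation items 3 (\<lambda>i x. - u i x) S)
       \<and> \<not> (\<exists>S. MmS_allocation items 3 w S)
       \<and> (\<exists>S. MmS_allocation items 3 (\<lambda>i x. - w i x) S)"
  using yes_u no_neg_u no_w yes_neg_w by blast

end
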